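(* Let $d\ge1$, $r\ge3$ and $n=dr\ge2$. If $r\ge 2^9$, then $$2^{n-2}r^2(2d+5)\Big(1-\frac{20\log_2^2 r}{2n+5r}\Big)\le \mathrm{td}(Q_n(d,r))\le 2^{n-2}r^2(2d+5)\Big(1-\frac{8(r-1)}{2nr+5r^2}\Big);$$ and if $3\le r<2^9$, then $$2^{n-2}(2nr+r^2)\le \mathrm{td}(Q_n(d,r))\le 2^{n-2}(2nr+5r^2-8r+8).$$
   Context: $\mathbb{Z}_2^n=\{0,1\}^n$ with coordinatewise addition mod 2; $e_i$ is the $i$-th standard basis vector, subscripts read modulo $n$. The recursive cube of rings $Q_n(d,r)$ (for $n\ge d$, $dr\equiv0\pmod n$) is the simple graph on $\mathbb{Z}_2^n\times\mathbb{Z}_r$ in which $(a,x)$ is adjacent to $(a+e_{i+dx},x)$ for $1\le i\le d$ and to $(a,x\pm1)$; it is vertex-transitive. For a vertex-transitive graph $X$, the total distance $\mathrm{td}(X)=\sum_{v\in V(X)}\mathrm{dist}(u,v)$ for any fixed vertex $u$ (here one may take $u=(0_n,0)$). $\log_2^2 r=(\log_2 r)^2$. *)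

theory Defs
  imports Complex_Main
begin

text \<open>Vertices of the recursive cube of rings Q_n(d,r): pairs (a,x) where a is an
element of Z_2^n, encoded as the set of coordinates equal to 1 (a subset of
{0..<n}; coordinate j of the paper, read mod n, is stored as j mod n), and
x is an element of Z_r, encoded as its representative in {0..<r}.
Adding the basis vector e_j is symmetric difference with the singleton {j mod n}.\<close>

definition rcr_vertices :: "nat \<Rightarrow> nat \<Rightarrow> (nat set \<times> nat) set" where
  "rcr_vertices n r = Pow {..<n} \<times> {..<r}"

definition rcr_adj :: "nat \<Rightarrow> nat \<Rightarrow> nat \<Rightarrow> (nat set \<times> nat) \<Rightarrow> (nat set \<times> nat) \<Rightarrow> bool" where
  "rcr_adj n d r u v \<longleftrightarrow>
     (\<exists>i\<in>{1..d}. v = (fst u \<union> {(i + d * snd u) mod n} - (fst u \<inter> {(i + d * snd u) mod n}), snd u))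
   \<or> (fst v = fst u \<and> (snd v = (snd u + 1) mod r \<or> snd v = (snd u + r - 1) mod r))"

definition rcr_edges :: "nat \<Rightarrow> nat \<Rightarrow> nat \<Rightarrow> ((nat set \<times> nat) \<times> (nat set \<times> nat)) set" where
  "rcr_edges n d r = {(u, v). u \<in> rcr_vertices n r \<and> v \<in> rcr_vertices n r \<and> rcr_adj n d r u v}"

definition rcr_dist :: "nat \<Rightarrow> nat \<Rightarrow> nat \<Rightarrow> (nat set \<times> nat) \<Rightarrow> (nat set \<times> nat) \<Rightarrow> nat" where
  "rcr_dist n d r u v = (LEAST k. (u, v) \<in> rcr_edges n d r ^^ k)"

text \<open>Total distance from the vertex (0_n, 0) (the graph is vertex-transitive).\<close>
definition rcr_td :: "nat \<Rightarrow> nat \<Rightarrow> nat \<Rightarrow> nat" where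
  "rcr_td n d r = (\<Sum>v\<in>rcr_vertices n r. rcr_dist n d r ({}, 0) v)"

end

theory Submission
  imports Defs
begin

definition blk :: "nat \<Rightarrow> nat \<Rightarrow> nat \<Rightarrow> nat" where
  "blk d r j = (if j = 0 then r - 1 else (j - 1) div d)"

lemma blk_B:
  assumes "d \<ge> 1" "r \<ge> 1" "i \<in> {1..d}" "y < r"
  shows "blk d r ((i + d*y) mod (d*r)) = y"
proof -
  have le: "i + d*y \<le> d*r"
  proof -
    have "d*y \<le> d*(r-1)" using assms by simp
    also have "\<dots> = d*r - d" by (simp add: right_diff_distrib')
    finally show ?thesis using assms by (auto simp: le_diff_conv2)
  qed
  show ?thesis
  proof (cases "i + d*y < d*r")
    case True
    then have m: "(i + d*y) mod (d*r) = i + d*y" by simp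
    have "i + d*y - 1 = d*y + (i - 1)" using assms by simp
    then have "(i + d*y - 1) div d = (d*y + (i - 1)) div d" by simp
    also have "\<dots> = y + (i-1) div d" using assms div_mult_self4[of d y "i-1"] by linarith
    also have "(i-1) div d = 0" using assms by (intro div_less) auto
    finally have "(i + d*y - 1) div d = y" by simp
    then show ?thesis using m assms by (simp add: blk_def)
  next
    case False
    then have eq: "i + d*y = d*r" using le by simp
    have "y = r - 1"
    proof -
      have "i \<le> d" using assms by simp
      then have "d*y \<ge> d*r - d" using eq by linarith
      also have "d*r - d = d*(r-1)" by (simp add: right_diff_distrib')
      finally have "r - 1 \<le> y" using assms by simp
      moreover have "y \<le> r - 1" using assms by simp
      ultimately show ?thesis by simp
    qed
    then show ?thesis using eq by (simp add: blk_def)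
  qed
qed

lemma blk_lt:
  assumes "d \<ge> 1" "r \<ge> 1" "j < d*r"
  shows "blk d r j < r"
proof (cases "j = 0")
  case True then show ?thesis using assms by (simp add: blk_def)
next
  case False
  have "(j - 1) div d < r" using assms by (simp add: div_less_iff_less_mult mult.commute)
  then show ?thesis using False by (simp add: blk_def)
qed

lemma blk_inv:
  assumes "d \<ge> 1" "r \<ge> 1" "j < d*r"
  shows "\<exists>i\<in>{1..d}. j = (i + d * blk d r j) mod (d*r)"
proof (cases "j = 0")
  case True
  have "(d + d*(r-1)) = d*r" using assms by (simp add: algebra_simps)
  then have "(d + d * blk d r j) mod (d*r) = 0" using True by (simp add: blk_def)
  then show ?thesis using True assms by force
next
  case False
  define y where "y = (j-1) div d"
  define i where "i = (j-1) mod d + 1"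
  have "i + d*y = j" using False unfolding i_def y_def
    by (metis One_nat_def Suc_pred add.commute add_Suc_right mod_mult_div_eq neq0_conv plus_1_eq_Suc)
  moreover have "i \<in> {1..d}" using assms unfolding i_def
    by (simp add: Suc_leI)
  ultimately show ?thesis using False assms by (auto simp: blk_def y_def intro!: bexI[of _ i])
qed

definition feas :: "nat \<Rightarrow> nat set \<Rightarrow> nat \<Rightarrow> int \<Rightarrow> int \<Rightarrow> int \<Rightarrow> int \<Rightarrow> bool" where
 "feas r S x lo hi e z \<longleftrightarrow> lo \<le> z \<and> z \<le> hi \<and> lo \<le> e \<and> e \<le> hi \<and> z mod int r = int x \<and> e mod int r = 0
     \<and> (\<forall>s\<in>S. \<exists>w. lo \<le> w \<and> w \<le> hi \<and> w mod int r = int s)"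

definition cst :: "int \<Rightarrow> int \<Rightarrow> int \<Rightarrow> int \<Rightarrow> int" where
 "cst lo hi e z = (hi - lo) + min ((z - lo) + (hi - e)) ((hi - z) + (e - lo))"

definition TT :: "nat \<Rightarrow> nat set \<Rightarrow> nat \<Rightarrow> nat" where
 "TT r S x = (LEAST c. \<exists>lo hi e z. feas r S x lo hi e z \<and> int c = cst lo hi e z)"

lemma cst_nonneg: "feas r S x lo hi e z \<Longrightarrow> cst lo hi e z \<ge> 0"
  unfolding feas_def cst_def by auto

lemma TT_ex:
  assumes "S \<subseteq> {..<r}" "x < r"
  shows "\<exists>c lo hi e z. feas r S x lo hi e z \<and> int c = cst lo hi e z"
proof -
  have f: "feas r S x 0 (int r - 1) 0 (int x)"
  proof -
    have "\<forall>s\<in>S. \<exists>w. 0 \<le> w \<and> w \<le> int r - 1 \<and> w mod int r = int s"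
    proof
      fix s assume "s \<in> S"
      then have "s < r" using assms by auto
      then show "\<exists>w. 0 \<le> w \<and> w \<le> int r - 1 \<and> w mod int r = int s"
        by (intro exI[of _ "int s"]) auto
    qed
    then show ?thesis using assms unfolding feas_def by auto
  qed
  show ?thesis using cst_nonneg[OF f] f by (intro exI[of _ "nat (cst 0 (int r - 1) 0 (int x))"]) auto
qed

lemma TT_attain:
  assumes "S \<subseteq> {..<r}" "x < r"
  obtains lo hi e z where "feas r S x lo hi e z" "int (TT r S x) = cst lo hi e z"
proof -
  from TT_ex[OF assms] obtain c where "\<exists>lo hi e z. feas r S x lo hi e z \<and> int c = cst lo hi e z" by blast
  then have "\<exists>lo hi e z. feas r S x lo hi e z \<and> int (TT r S x) = cst lo hi e z"
    unfolding TT_def by (rule LeastI)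
  then show ?thesis using that by blast
qed

lemma TT_le:
  assumes "feas r S x lo hi e z"
  shows "int (TT r S x) \<le> cst lo hi e z"
proof -
  have "TT r S x \<le> nat (cst lo hi e z)"
    unfolding TT_def using assms cst_nonneg[OF assms] by (intro Least_le) auto
  then show ?thesis using cst_nonneg[OF assms] by linarith
qed

lemma TT_zero: "r \<ge> 1 \<Longrightarrow> TT r {} 0 = 0"
proof -
  assume "r \<ge> 1"
  have "feas r {} 0 0 0 0 0" unfolding feas_def by simp
  from TT_le[OF this] show ?thesis by (simp add: cst_def)
qed

lemma TT_mono:
  assumes "S' \<subseteq> insert x S" "S \<subseteq> {..<r}" "x < r"
  shows "TT r S' x \<le> TT r S x"
proof -
  obtain lo hi e z where f: "feas r S x lo hi e z" and c: "int (TT r S x) = cst lo hi e z"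
    using TT_attain[OF assms(2,3)] by blast
  have "feas r S' x lo hi e z" using f assms(1) unfolding feas_def by blast
  from TT_le[OF this] c show ?thesis by linarith
qed

lemma TT_lip:
  assumes "S \<subseteq> {..<r}" "x' < r" "x < r" "r \<ge> 1"
    and adj: "x = (x' + 1) mod r \<or> x = (x' + r - 1) mod r"
  shows "TT r S x \<le> TT r S x' + 1"
proof -
  obtain lo hi e z where f: "feas r S x' lo hi e z" and c: "int (TT r S x') = cst lo hi e z"
    using TT_attain[OF assms(1,2)] by blast
  obtain z' where z': "z' = z + 1 \<or> z' = z - 1" and zm: "z' mod int r = int x"
  proof (cases "x = (x' + 1) mod r")
    case True
    have "(z + 1) mod int r = (int x' + 1) mod int r" using f unfolding feas_def
      by (metis mod_add_left_eq)
    also have "\<dots> = int x" using True by (simp add: zmod_int ac_simps)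
    finally show ?thesis using that by blast
  next
    case False
    then have xx: "x = (x' + r - 1) mod r" using adj by blast
    have "(z - 1) mod int r = (int x' - 1) mod int r" using f unfolding feas_def
      by (metis mod_diff_left_eq)
    also have "\<dots> = (int x' + int r - 1) mod int r"
      by (metis add.commute add_diff_eq mod_add_self2)
    also have "\<dots> = int x" using xx assms by (simp add: zmod_int of_nat_diff)
    finally show ?thesis using that by blast
  qed
  define lo' where "lo' = min lo z'"
  define hi' where "hi' = max hi z'"
  have f': "feas r S x lo' hi' e z'" using f zm unfolding feas_def lo'_def hi'_def
    by (auto; meson min.coboundedI1 max.coboundedI1 order_trans)
  have "cst lo' hi' e z' \<le> cst lo hi e z + 1"
    using f z' unfolding cst_def feas_def lo'_def hi'_def by (auto simp: min_def max_def)
  with TT_le[OF f'] c show ?thesis by linarith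
qed

lemma cst_lb_path:
  assumes "feas r S x lo hi e z" "lo \<le> w" "w \<le> hi"
  shows "cst lo hi e z \<ge> \<bar>z - w\<bar> + \<bar>w - e\<bar>"
proof -
  have a: "lo \<le> z" "z \<le> hi" "lo \<le> e" "e \<le> hi" using assms(1) unfolding feas_def by auto
  have "\<bar>z - w\<bar> + \<bar>w - e\<bar> \<le> (z - lo) + (hi - lo) + (hi - e)"
       "\<bar>z - w\<bar> + \<bar>w - e\<bar> \<le> (hi - z) + (hi - lo) + (e - lo)"
    using a assms(2,3) by (simp_all add: abs_le_iff; linarith)+
  then show ?thesis unfolding cst_def by linarith
qed

lemma mod_dist:
  fixes z e :: int
  assumes "z mod int r = int x" "e mod int r = 0" "x < r"
  shows "\<bar>z - e\<bar> \<ge> min (int x) (int r - int x)"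
proof -
  have "(z - e) mod int r = (z mod int r - e mod int r) mod int r" by (simp add: mod_diff_eq)
  also have "\<dots> = int x" using assms by simp
  finally have m: "(z - e) mod int r = int x" .
  define q where "q = (z - e) div int r"
  have q: "z - e = q * int r + int x" using m div_mult_mod_eq[of "z - e" "int r"] unfolding q_def by simp
  show ?thesis
  proof (cases "q \<ge> 0")
    case True
    then have "q * int r \<ge> 0" by simp
    then show ?thesis using q by linarith
  next
    case False
    then have "q \<le> -1" by simp
    then have "q * int r \<le> (-1) * int r" by (intro mult_right_mono) auto
    then have "q * int r \<le> - int r" by simp
    then show ?thesis using q by linarith
  qed
qed

lemma TT_lb_dist:
  assumes "S \<subseteq> {..<r}" "x < r"
  shows "int (TT r S x) \<ge> min (int x) (int r - int x)"
proof -
  obtain lo hi e z where f: "feas r S x lo hi e z" and c: "int (TT r S x) = cst lo hi e z"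
    using TT_attain[OF assms] by blast
  have "cst lo hi e z \<ge> \<bar>z - e\<bar> + \<bar>e - e\<bar>" using f by (intro cst_lb_path) (auto simp: feas_def)
  moreover have "\<bar>z - e\<bar> \<ge> min (int x) (int r - int x)" using f assms by (intro mod_dist) (auto simp: feas_def)
  ultimately show ?thesis using c by linarith
qed

lemma TT_lb_one:
  assumes "S \<subseteq> {..<r}" "1 \<in> S" "r \<ge> 3"
  shows "TT r S 0 \<ge> 2"
proof -
  have r0: "0 < r" using assms by simp
  obtain lo hi e z where f: "feas r S 0 lo hi e z" and c: "int (TT r S 0) = cst lo hi e z"
    using TT_attain[OF assms(1) r0] by blast
  obtain w where w: "lo \<le> w" "w \<le> hi" "w mod int r = 1" using f assms unfolding feas_def by force
  have "z \<noteq> w" "w \<noteq> e" using f w assms unfolding feas_def by auto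
  moreover have "cst lo hi e z \<ge> \<bar>z - w\<bar> + \<bar>w - e\<bar>" using f w by (intro cst_lb_path)
  ultimately show ?thesis using c by linarith
qed

definition good :: "nat \<Rightarrow> nat \<Rightarrow> nat set \<Rightarrow> bool" where
  "good r g S \<longleftrightarrow> (\<forall>y<r. \<exists>t<g. (y + t) mod r \<in> S)"

lemma gap_len:
  assumes "feas r S x lo hi e z" "good r g S" "r \<ge> 1"
  shows "hi - lo \<ge> int r - int g"
proof (rule ccontr)
  assume H: "\<not> ?thesis"
  define y where "y = nat ((hi + 1) mod int r)"
  have yr: "y < r" unfolding y_def using assms
    by (simp add: nat_less_iff)
  obtain t where t: "t < g" "(y + t) mod r \<in> S" using assms(2) yr unfolding good_def by blast
  obtain w where w: "lo \<le> w" "w \<le> hi" "w mod int r = int ((y + t) mod r)" using assms(1) t unfolding feas_def by blast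
  have "int ((y + t) mod r) = (int y + int t) mod int r" by (simp add: zmod_int)
  also have "int y = (hi + 1) mod int r" unfolding y_def using assms by simp
  also have "((hi + 1) mod int r + int t) mod int r = (hi + 1 + int t) mod int r" by (simp add: mod_add_left_eq)
  finally have "(hi + 1 + int t) mod int r = w mod int r" using w by simp
  then have "int r dvd (hi + 1 + int t - w)" by (simp add: mod_eq_dvd_iff)
  moreover have "0 < hi + 1 + int t - w" "hi + 1 + int t - w < int r" using w t H by auto
  ultimately show False using zdvd_imp_le by fastforce
qed

lemma cost_arith:
  fixes lo hi e z q :: int
  assumes "lo \<le> z" "z \<le> hi" "lo \<le> e" "e \<le> hi" "z - e = q * int r + int x" "x < r"
    "hi - lo \<ge> int r - int g" "int r \<ge> 2 * int g"
  shows "cst lo hi e z \<ge> int r + min (int x) (int r - int x) - 2 * int g"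
proof -
  define M where "M = min (int x) (int r - int x)"
  have M: "M \<le> int x" "M \<le> int r - int x" unfolding M_def by auto
  define L where "L = hi - lo"
  define D where "D = z - e"
  have LD: "L \<ge> \<bar>D\<bar>" "L \<ge> int r - int g" using assms unfolding L_def D_def by linarith+
  have Dq: "D = q * int r + int x" using assms unfolding D_def by simp
  have A: "q \<le> -2 \<Longrightarrow> q * int r \<le> -2 * int r" by (intro mult_right_mono) auto
  have B: "q \<ge> 1 \<Longrightarrow> q * int r \<ge> int r" by (simp add: mult_right_mono[of 1 q "int r", simplified])
  have C0: "q \<ge> 0 \<Longrightarrow> q * int r \<ge> 0" by simp
  have Cm: "q \<le> -1 \<Longrightarrow> q * int r \<le> - int r" using mult_right_mono[of q "-1" "int r"] by simp
  have c1: "q \<le> -2 \<or> q = -1 \<or> q \<ge> 0" by linarith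
  have c2: "q \<le> -1 \<or> q = 0 \<or> q \<ge> 1" by linarith
  have b1: "int r + M - 2 * int g \<le> 2 * L + D"
  proof -
    { assume "q \<le> -2" then have ?thesis using A Dq LD M assms by linarith }
    moreover { assume "q = -1" then have ?thesis using Dq LD M assms by simp }
    moreover { assume "q \<ge> 0" then have ?thesis using C0 Dq LD M assms by linarith }
    ultimately show ?thesis using c1 by blast
  qed
  have b2: "int r + M - 2 * int g \<le> 2 * L - D"
  proof -
    { assume "q \<le> -1" then have ?thesis using Cm Dq LD M assms by linarith }
    moreover { assume "q = 0" then have ?thesis using Dq LD M assms by simp }
    moreover { assume "q \<ge> 1" then have ?thesis using B Dq LD M assms by linarith }
    ultimately show ?thesis using c2 by blast
  qed
  have "z - lo + (hi - e) = L + D" "hi - z + (e - lo) = L - D" unfolding L_def D_def by simp_all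
  then show ?thesis using b1 b2 unfolding cst_def M_def[symmetric] L_def[symmetric] by simp
qed

lemma TT_lb_good:
  assumes "S \<subseteq> {..<r}" "x < r" "good r g S" "r \<ge> 2 * g" "r \<ge> 1"
  shows "int (TT r S x) \<ge> int r + min (int x) (int r - int x) - 2 * int g"
proof -
  obtain lo hi e z where f: "feas r S x lo hi e z" and c: "int (TT r S x) = cst lo hi e z"
    using TT_attain[OF assms(1,2)] by blast
  have "(z - e) mod int r = (z mod int r - e mod int r) mod int r" by (simp add: mod_diff_eq)
  also have "\<dots> = int x" using f assms unfolding feas_def by simp
  finally have m: "(z - e) mod int r = int x" .
  define q where "q = (z - e) div int r"
  have q: "z - e = q * int r + int x" using m div_mult_mod_eq[of "z - e" "int r"] unfolding q_def by simp
  have "cst lo hi e z \<ge> int r + min (int x) (int r - int x) - 2 * int g"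
    using f q gap_len[OF f assms(3,5)] assms unfolding feas_def
    by (intro cost_arith[where q=q]) auto
  then show ?thesis using c by linarith
qed

definition pot :: "nat \<Rightarrow> nat \<Rightarrow> nat set \<times> nat \<Rightarrow> nat" where
  "pot d r v = card (fst v) + TT r (blk d r ` fst v) (snd v)"

lemma blkS: "d \<ge> 1 \<Longrightarrow> r \<ge> 1 \<Longrightarrow> a \<subseteq> {..<d*r} \<Longrightarrow> blk d r ` a \<subseteq> {..<r}"
  using blk_lt by auto

lemma edge_pot:
  assumes "d \<ge> 1" "r \<ge> 3" "n = d*r" "(u, v) \<in> rcr_edges n d r"
  shows "pot d r v \<le> pot d r u + 1"
proof -
  obtain a x where u: "u = (a, x)" by (cases u)
  have au: "a \<subseteq> {..<n}" "x < r" using assms(4) u unfolding rcr_edges_def rcr_vertices_def by auto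
  have vV: "fst v \<subseteq> {..<n}" "snd v < r" using assms(4) unfolding rcr_edges_def rcr_vertices_def by auto
  have r1: "r \<ge> 1" using assms by simp
  have S: "blk d r ` a \<subseteq> {..<r}" using blkS[OF assms(1) r1] au assms(3) by simp
  have adj: "rcr_adj n d r u v" using assms(4) unfolding rcr_edges_def by auto
  then consider (flip) i where "i \<in> {1..d}" "v = (a \<union> {(i + d * x) mod n} - (a \<inter> {(i + d * x) mod n}), x)"
    | (ring) "fst v = a" "snd v = (x + 1) mod r \<or> snd v = (x + r - 1) mod r"
    unfolding rcr_adj_def u by auto
  then show ?thesis
  proof cases
    case flip
    define j where "j = (i + d * x) mod n"
    have bj: "blk d r j = x" unfolding j_def using blk_B[OF assms(1) r1 flip(1) au(2)] assms(3) by simp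
    have v: "v = (a \<union> {j} - (a \<inter> {j}), x)" using flip unfolding j_def by simp
    have fin: "finite a" using au finite_subset by blast
    have card: "card (a \<union> {j} - (a \<inter> {j})) \<le> card a + 1"
    proof (cases "j \<in> a")
      case True
      then have "a \<union> {j} - (a \<inter> {j}) = a - {j}" by auto
      moreover have "card (a - {j}) \<le> card a" by (rule card_Diff1_le)
      ultimately show ?thesis by simp
    next
      case False
      then have "a \<union> {j} - (a \<inter> {j}) = insert j a" by auto
      then show ?thesis using fin by (simp add: card_insert_if)
    qed
    have sub: "blk d r ` (a \<union> {j} - (a \<inter> {j})) \<subseteq> insert x (blk d r ` a)" using bj by auto
    have "TT r (blk d r ` (a \<union> {j} - (a \<inter> {j}))) x \<le> TT r (blk d r ` a) x"
      by (rule TT_mono[OF sub S au(2)])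
    then show ?thesis using card v u unfolding pot_def by simp
  next
    case ring
    have "TT r (blk d r ` a) (snd v) \<le> TT r (blk d r ` a) x + 1"
      using ring(2) by (intro TT_lip[OF S au(2) vV(2) r1]) auto
    then show ?thesis using ring u unfolding pot_def by simp
  qed
qed

lemma pot_walk:
  assumes "d \<ge> 1" "r \<ge> 3" "n = d*r"
  shows "(({}, 0), v) \<in> rcr_edges n d r ^^ k \<Longrightarrow> pot d r v \<le> k"
proof (induction k arbitrary: v)
  case 0
  then have "v = ({}, 0)" by simp
  then show ?case using TT_zero[of r] assms unfolding pot_def by simp
next
  case (Suc k)
  then obtain u where "(({}, 0), u) \<in> rcr_edges n d r ^^ k" "(u, v) \<in> rcr_edges n d r"
    by (auto elim: relpow_Suc_E)
  with Suc.IH edge_pot[OF assms] show ?case by fastforce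
qed

definition flip :: "nat set \<Rightarrow> nat set \<Rightarrow> nat set" where
  "flip b c = (b - c) \<union> (c - b)"

lemma R_flip:
  assumes "d \<ge> 1" "r \<ge> 3" "n = d*r" "y < r"
  shows "finite c \<Longrightarrow> b \<subseteq> {..<n} \<Longrightarrow> c \<subseteq> {j. j < n \<and> blk d r j = y}
     \<Longrightarrow> ((b, y), (flip b c, y)) \<in> rcr_edges n d r ^^ card c"
proof (induction c rule: finite_induct)
  case empty
  then show ?case by (simp add: flip_def)
next
  case (insert j c)
  have IH: "((b, y), (flip b c, y)) \<in> rcr_edges n d r ^^ card c" using insert by auto
  have jn: "j < n" "blk d r j = y" using insert by auto
  obtain i where i: "i \<in> {1..d}" "j = (i + d * y) mod n"
    using blk_inv[OF assms(1) _ , of r j] jn assms by auto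
  have fl: "flip b (insert j c) = flip b c \<union> {j} - (flip b c \<inter> {j})"
    using insert(2) unfolding flip_def by auto
  have "((flip b c, y), (flip b (insert j c), y)) \<in> rcr_edges n d r"
    unfolding rcr_edges_def rcr_vertices_def rcr_adj_def using insert(4) insert(5) jn assms(4) i fl
    by (auto simp: flip_def)
  then show ?case using IH insert(1,2) by (auto intro: relpow_Suc_I)
qed

lemma R_move:
  assumes "b \<subseteq> {..<n}" "y < r" "y' = (y + 1) mod r \<or> y' = (y + r - 1) mod r"
  shows "((b, y), (b, y')) \<in> rcr_edges n d r"
  using assms unfolding rcr_edges_def rcr_vertices_def rcr_adj_def by auto

lemma pos_step1:
  fixes p :: int assumes "r > 0"
  shows "nat ((p + 1) mod int r) = (nat (p mod int r) + 1) mod r"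
proof -
  have "(p + 1) mod int r = (p mod int r + 1) mod int r" by (simp add: mod_add_left_eq)
  also have "nat \<dots> = nat (p mod int r + 1) mod nat (int r)"
    using assms by (intro nat_mod_distrib) auto
  finally show ?thesis using assms by (simp add: nat_add_distrib)
qed

lemma pos_step2:
  fixes p :: int assumes "r > 0"
  shows "nat ((p - 1) mod int r) = (nat (p mod int r) + r - 1) mod r"
proof -
  have "(p - 1) mod int r = (p mod int r - 1) mod int r" by (simp add: mod_diff_left_eq)
  also have "\<dots> = (p mod int r + int r - 1) mod int r"
    by (metis add.commute add_diff_eq mod_add_self2)
  also have "nat \<dots> = nat (p mod int r + int r - 1) mod nat (int r)"
  proof -
    have "p mod int r \<ge> 0" using assms by simp
    then show ?thesis using assms by (intro nat_mod_distrib) linarith+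
  qed
  also have "nat (p mod int r + int r - 1) = nat (p mod int r) + r - 1"
  proof -
    have q0: "p mod int r \<ge> 0" using assms by simp
    have "int (nat (p mod int r) + r - 1) = p mod int r + int r - 1" using q0 assms by (simp add: of_nat_diff)
    then show ?thesis by (metis nat_int)
  qed
  finally show ?thesis by simp
qed

lemma R_path:
  assumes "d \<ge> 1" "r \<ge> 3" "n = d*r"
  shows "(\<forall>i<m. p (Suc i) = p i + 1 \<or> p (Suc i) = p i - 1) \<Longrightarrow> finite c \<Longrightarrow> b \<subseteq> {..<n} \<Longrightarrow>
     c \<subseteq> {j. j < n \<and> blk d r j \<in> (\<lambda>i. nat (p i mod int r)) ` {..m}} \<Longrightarrow>
     ((b, nat (p 0 mod int r)), (flip b c, nat (p m mod int r))) \<in> rcr_edges n d r ^^ (m + card c)"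
proof (induction m arbitrary: c)
  case 0
  have "c \<subseteq> {j. j < n \<and> blk d r j = nat (p 0 mod int r)}" using 0 by auto
  moreover have "nat (p 0 mod int r) < r" using assms by (simp add: nat_less_iff)
  ultimately show ?case using R_flip[OF assms] 0 by simp
next
  case (Suc m)
  define pos where "pos i = nat (p i mod int r)" for i
  define c2 where "c2 = {j\<in>c. blk d r j = pos (Suc m)}"
  define c1 where "c1 = c - c2"
  have posr: "pos i < r" for i using assms unfolding pos_def by (simp add: nat_less_iff)
  have c1s: "c1 \<subseteq> {j. j < n \<and> blk d r j \<in> pos ` {..m}}"
  proof
    fix j assume "j \<in> c1"
    then have "j \<in> c" "blk d r j \<noteq> pos (Suc m)" unfolding c1_def c2_def by auto
    then obtain i where "i \<le> Suc m" "blk d r j = pos i" "j < n" using Suc.prems(4) unfolding pos_def by auto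
    then show "j \<in> {j. j < n \<and> blk d r j \<in> pos ` {..m}}" using \<open>blk d r j \<noteq> pos (Suc m)\<close>
      by (cases "i = Suc m") auto
  qed
  have fin: "finite c1" "finite c2" using Suc.prems unfolding c1_def c2_def by auto
  have IH: "((b, pos 0), (flip b c1, pos m)) \<in> rcr_edges n d r ^^ (m + card c1)"
    using Suc.IH[of c1] Suc.prems fin c1s unfolding pos_def by auto
  have fs: "flip b c1 \<subseteq> {..<n}" using Suc.prems unfolding flip_def c1_def by auto
  have "pos (Suc m) = (pos m + 1) mod r \<or> pos (Suc m) = (pos m + r - 1) mod r"
    using Suc.prems(1) pos_step1[of r "p m"] pos_step2[of r "p m"] assms unfolding pos_def by auto
  then have mv: "((flip b c1, pos m), (flip b c1, pos (Suc m))) \<in> rcr_edges n d r"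
    by (intro R_move[OF fs posr])
  have st1: "((b, pos 0), (flip b c1, pos (Suc m))) \<in> rcr_edges n d r ^^ Suc (m + card c1)"
    using IH mv by (rule relpow_Suc_I)
  have c2s: "c2 \<subseteq> {j. j < n \<and> blk d r j = pos (Suc m)}" using Suc.prems unfolding c2_def by auto
  have st2: "((flip b c1, pos (Suc m)), (flip (flip b c1) c2, pos (Suc m))) \<in> rcr_edges n d r ^^ card c2"
    using R_flip[OF assms posr fin(2) fs c2s] .
  have "((b, pos 0), (flip (flip b c1) c2, pos (Suc m))) \<in> rcr_edges n d r ^^ (Suc (m + card c1) + card c2)"
    unfolding relpow_add using st1 st2 by blast
  moreover have "flip (flip b c1) c2 = flip b c" unfolding flip_def c1_def c2_def by auto
  moreover have "Suc (m + card c1) + card c2 = Suc m + card c"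
  proof -
    have "c = c1 \<union> c2" "c1 \<inter> c2 = {}" unfolding c1_def c2_def by auto
    then have "card c = card c1 + card c2" using fin card_Un_disjoint by metis
    then show ?thesis by simp
  qed
  ultimately have "((b, pos 0), (flip b c, pos (Suc m))) \<in> rcr_edges n d r ^^ (Suc m + card c)" by metis
  then show ?case unfolding pos_def .
qed

lemma walk_bound:
  assumes "d \<ge> 1" "r \<ge> 3" "n = d*r" "a \<subseteq> {..<n}" "x < r"
    "p 0 = 0" "\<forall>i<m. p (Suc i) = p i + 1 \<or> p (Suc i) = p i - 1"
    "\<forall>t. lo \<le> t \<and> t < lo + int r \<longrightarrow> (\<exists>i\<le>m. p i = t)"
    "p m mod int r = int x"
  shows "(({}, 0), (a, x)) \<in> rcr_edges n d r ^^ (m + card a)"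
proof -
  have fin: "finite a" using assms(4) finite_subset by blast
  have cov: "a \<subseteq> {j. j < n \<and> blk d r j \<in> (\<lambda>i. nat (p i mod int r)) ` {..m}}"
  proof
    fix j assume j: "j \<in> a"
    then have jn: "j < n" using assms by auto
    define y where "y = blk d r j"
    have yr: "y < r" unfolding y_def using blk_lt[of d r j] jn assms by simp
    define t where "t = lo + (int y - lo) mod int r"
    have "lo \<le> t" "t < lo + int r" unfolding t_def using assms by auto
    then obtain i where i: "i \<le> m" "p i = t" using assms(8) by blast
    have "t mod int r = (lo + (int y - lo)) mod int r" unfolding t_def by (simp add: mod_add_right_eq)
    also have "\<dots> = int y" using yr by simp
    finally have "nat (p i mod int r) = y" using i by simp
    then have "blk d r j \<in> (\<lambda>i. nat (p i mod int r)) ` {..m}" using i unfolding y_def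
      by (metis atMost_iff image_eqI)
    then show "j \<in> {j. j < n \<and> blk d r j \<in> (\<lambda>i. nat (p i mod int r)) ` {..m}}"
      using jn by auto
  qed
  have "flip {} a = a" unfolding flip_def by auto
  then show ?thesis using R_path[OF assms(1-3), of m p a "{}"] assms fin cov by simp
qed

definition W :: "nat \<Rightarrow> nat \<Rightarrow> nat" where
  "W r x = (if x = 0 then r else min (r + x - 2) (2*r - x - 2))"

lemma walk_W:
  assumes "d \<ge> 1" "r \<ge> 3" "n = d*r" "a \<subseteq> {..<n}" "x < r"
  shows "(({}, 0), (a, x)) \<in> rcr_edges n d r ^^ (W r x + card a)"
proof (cases "x = 0")
  case True
  have "(({}, 0), (a, x)) \<in> rcr_edges n d r ^^ (r + card a)"
  proof (rule walk_bound[OF assms, where p="\<lambda>i. int i" and lo=0])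
    show "\<forall>t. 0 \<le> t \<and> t < 0 + int r \<longrightarrow> (\<exists>i\<le>r. int i = t)"
    proof (intro allI impI)
      fix t :: int assume "0 \<le> t \<and> t < 0 + int r"
      then show "\<exists>i\<le>r. int i = t" by (intro exI[of _ "nat t"]) auto
    qed
  qed (use True in auto)
  then show ?thesis using True unfolding W_def by simp
next
  case False
  define p1 where "p1 i = (if i \<le> x - 1 then int i else 2 * (int x - 1) - int i)" for i
  define p2 where "p2 i = (if i \<le> r - x - 1 then - int i else int i - 2 * (int r - int x - 1))" for i
  have w1: "(({}, 0), (a, x)) \<in> rcr_edges n d r ^^ ((r + x - 2) + card a)"
  proof (rule walk_bound[OF assms, where p=p1 and lo="int x - int r"])
    show "p1 0 = 0" unfolding p1_def by simp
    show "\<forall>i<r + x - 2. p1 (Suc i) = p1 i + 1 \<or> p1 (Suc i) = p1 i - 1"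
      using False unfolding p1_def by auto
    show "\<forall>t. int x - int r \<le> t \<and> t < int x - int r + int r \<longrightarrow> (\<exists>i\<le>r + x - 2. p1 i = t)"
    proof (intro allI impI)
      fix t assume t: "int x - int r \<le> t \<and> t < int x - int r + int r"
      show "\<exists>i\<le>r + x - 2. p1 i = t"
      proof (cases "t \<ge> 0")
        case True
        then show ?thesis using t False assms unfolding p1_def by (intro exI[of _ "nat t"]) auto
      next
        case f2: False
        then show ?thesis using t False assms unfolding p1_def by (intro exI[of _ "nat (2 * (int x - 1) - t)"]) auto
      qed
    qed
    have "p1 (r + x - 2) = int x - int r" using False assms unfolding p1_def by auto
    then show "p1 (r + x - 2) mod int r = int x" using assms by simp
  qed
  have w2: "(({}, 0), (a, x)) \<in> rcr_edges n d r ^^ ((2 * r - x - 2) + card a)"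
  proof (rule walk_bound[OF assms, where p=p2 and lo="int x + 1 - int r"])
    show "p2 0 = 0" unfolding p2_def by simp
    show "\<forall>i<2 * r - x - 2. p2 (Suc i) = p2 i + 1 \<or> p2 (Suc i) = p2 i - 1"
      using False assms unfolding p2_def by auto
    show "\<forall>t. int x + 1 - int r \<le> t \<and> t < int x + 1 - int r + int r \<longrightarrow> (\<exists>i\<le>2 * r - x - 2. p2 i = t)"
    proof (intro allI impI)
      fix t assume t: "int x + 1 - int r \<le> t \<and> t < int x + 1 - int r + int r"
      show "\<exists>i\<le>2 * r - x - 2. p2 i = t"
      proof (cases "t \<le> 0")
        case True
        then show ?thesis using t False assms unfolding p2_def by (intro exI[of _ "nat (- t)"]) auto
      next
        case f2: False
        then show ?thesis using t False assms unfolding p2_def by (intro exI[of _ "nat (t + 2 * (int r - int x - 1))"]) auto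
      qed
    qed
    have "p2 (2 * r - x - 2) = int x" using False assms unfolding p2_def by auto
    then show "p2 (2 * r - x - 2) mod int r = int x" using assms by simp
  qed
  show ?thesis using False w1 w2 unfolding W_def by (cases "r + x - 2 \<le> 2 * r - x - 2") (auto simp: min_def)
qed

lemma dist_upper:
  assumes "d \<ge> 1" "r \<ge> 3" "n = d*r" "a \<subseteq> {..<n}" "x < r"
  shows "rcr_dist n d r ({}, 0) (a, x) \<le> W r x + card a"
  unfolding rcr_dist_def using walk_W[OF assms] by (rule Least_le)

lemma dist_lower:
  assumes "d \<ge> 1" "r \<ge> 3" "n = d*r" "a \<subseteq> {..<n}" "x < r"
  shows "card a + TT r (blk d r ` a) x \<le> rcr_dist n d r ({}, 0) (a, x)"
proof -
  have "(({}, 0), (a, x)) \<in> rcr_edges n d r ^^ rcr_dist n d r ({}, 0) (a, x)"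
    unfolding rcr_dist_def using walk_W[OF assms] by (rule LeastI)
  from pot_walk[OF assms(1-3) this] show ?thesis unfolding pot_def by simp
qed

lemma sum_card_Pow: "finite A \<Longrightarrow> 2 * (\<Sum>a\<in>Pow A. card a) = card A * 2 ^ card A"
proof (induction A rule: finite_induct)
  case empty then show ?case by simp
next
  case (insert x A)
  have P: "Pow (insert x A) = Pow A \<union> insert x ` Pow A" by (rule Pow_insert)
  have disj: "Pow A \<inter> insert x ` Pow A = {}" using insert by auto
  have inj: "inj_on (insert x) (Pow A)"
  proof (rule inj_onI)
    fix a b assume ab: "a \<in> Pow A" "b \<in> Pow A" "insert x a = insert x b"
    then have "x \<notin> a" "x \<notin> b" using insert(2) by auto
    then show "a = b" using ab(3) by (metis Diff_insert_absorb)
  qed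
  have fP: "finite (Pow A)" "finite (insert x ` Pow A)" using insert by auto
  have "(\<Sum>a\<in>insert x ` Pow A. card a) = (\<Sum>a\<in>Pow A. card (insert x a))"
    using sum.reindex[OF inj] by simp
  also have "\<dots> = (\<Sum>a\<in>Pow A. card a + 1)"
  proof (rule sum.cong)
    fix a assume "a \<in> Pow A"
    then have "finite a" "x \<notin> a" using insert finite_subset by auto
    then show "card (insert x a) = card a + 1" by simp
  qed simp
  also have "\<dots> = (\<Sum>a\<in>Pow A. card a) + (\<Sum>a\<in>Pow A. 1)" by (simp only: sum.distrib)
  also have "(\<Sum>a\<in>Pow A. (1::nat)) = 2 ^ card A" using insert by (simp add: card_Pow)
  finally have s2: "(\<Sum>a\<in>insert x ` Pow A. card a) = (\<Sum>a\<in>Pow A. card a) + 2 ^ card A" .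
  have "(\<Sum>a\<in>Pow (insert x A). card a) = (\<Sum>a\<in>Pow A. card a) + (\<Sum>a\<in>insert x ` Pow A. card a)"
    unfolding P using sum.union_disjoint[OF fP disj] by simp
  then show ?case using s2 insert by (simp add: algebra_simps)
qed

lemma h_formula: "4 * (\<Sum>x<r. min x (r - x)) + r mod 2 = (r::nat)^2"
proof (induction r rule: nat_less_induct)
  case (1 r)
  show ?case
  proof (cases r)
    case 0 then show ?thesis by simp
  next
    case (Suc r1)
    show ?thesis
    proof (cases r1)
      case 0 then show ?thesis using Suc by simp
    next
      case (Suc m)
      have rm: "r = Suc (Suc m)" using Suc \<open>r = Suc r1\<close> by simp
      have IH: "4 * (\<Sum>x<m. min x (m - x)) + m mod 2 = m^2" using 1 rm by simp
      have "(\<Sum>x<Suc (Suc m). min x (Suc (Suc m) - x)) = (\<Sum>x<Suc m. min (Suc x) (Suc (Suc m) - Suc x))"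
        by (subst sum.lessThan_Suc_shift) simp
      also have "\<dots> = (\<Sum>x<Suc m. min x (m - x) + 1)"
        by (rule sum.cong) auto
      also have "\<dots> = (\<Sum>x<Suc m. min x (m - x)) + (\<Sum>x<Suc m. 1)" by (simp only: sum.distrib)
      also have "(\<Sum>x<Suc m. (1::nat)) = Suc m" by simp
      also have "(\<Sum>x<Suc m. min x (m - x)) = (\<Sum>x<m. min x (m - x))" by simp
      finally have "(\<Sum>x<r. min x (r - x)) = (\<Sum>x<m. min x (m - x)) + Suc m" using rm by simp
      then show ?thesis using IH rm by (simp add: power2_eq_square algebra_simps)
    qed
  qed
qed

lemma W_le: "r \<ge> 3 \<Longrightarrow> x < r \<Longrightarrow> W r x \<le> r - 2 + min x (r - x) + (if x = 0 then 2 else 0)"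
  unfolding W_def by (auto simp: min_def)

lemma sum_W: "r \<ge> 3 \<Longrightarrow> 4 * (\<Sum>x<r. W r x) \<le> 5 * r^2 + 8 - 8 * r"
proof -
  assume r: "r \<ge> 3"
  have "(\<Sum>x<r. W r x) \<le> (\<Sum>x<r. r - 2 + min x (r - x) + (if x = 0 then 2 else 0))"
    using W_le[OF r] by (intro sum_mono) auto
  also have "\<dots> = (\<Sum>x<r. r - 2) + (\<Sum>x<r. min x (r - x)) + (\<Sum>x<r. (if x = 0 then 2 else 0))"
    by (simp only: sum.distrib)
  also have "(\<Sum>x<r. (if x = 0 then 2 else 0)) = (2::nat)" using r by (simp add: sum.delta)
  also have "(\<Sum>x<r. r - 2) = r * (r - 2)" by simp
  finally have "4 * (\<Sum>x<r. W r x) \<le> 4 * (r * (r - 2)) + 4 * (\<Sum>x<r. min x (r - x)) + 8" by simp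
  also have "4 * (\<Sum>x<r. min x (r - x)) \<le> r^2" using h_formula[of r] by linarith
  finally have A: "4 * (\<Sum>x<r. W r x) \<le> 4 * (r * (r - 2)) + r^2 + 8" by simp
  have "4 * (r * (r - 2)) + r^2 + 8 = 5 * r^2 + 8 - 8 * r" using r
    by (simp add: power2_eq_square algebra_simps diff_mult_distrib2)
  then show ?thesis using A by simp
qed

lemma card_Pow_contains:
  assumes "finite A" "j \<in> A"
  shows "card {a \<in> Pow A. j \<in> a} = 2 ^ (card A - 1)"
proof -
  have eq: "{a \<in> Pow A. j \<in> a} = Pow A - Pow (A - {j})" by auto
  have "card (Pow A - Pow (A - {j})) = card (Pow A) - card (Pow (A - {j}))"
    using assms by (intro card_Diff_subset) auto
  also have "\<dots> = 2 ^ card A - 2 ^ (card A - 1)" using assms by (simp add: card_Pow)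
  also have "\<dots> = 2 ^ (card A - 1)"
  proof -
    have "card A \<ge> 1" using assms by (metis One_nat_def Suc_leI card_gt_0_iff empty_iff)
    then have "(2::nat) ^ card A = 2 * 2 ^ (card A - 1)" by (metis Suc_diff_le diff_Suc_1 power_Suc)
    then show ?thesis by simp
  qed
  finally show ?thesis using eq by simp
qed

lemma card_Pow_avoid:
  assumes "finite A" "E \<subseteq> A"
  shows "card {a \<in> Pow A. a \<inter> E = {}} = 2 ^ (card A - card E)"
proof -
  have "{a \<in> Pow A. a \<inter> E = {}} = Pow (A - E)" by auto
  moreover have "card (A - E) = card A - card E" using assms finite_subset by (intro card_Diff_subset) auto
  ultimately show ?thesis using assms by (simp add: card_Pow)
qed

lemma mod_add_lt: "y < r \<Longrightarrow> t < r \<Longrightarrow> (y + t) mod r = (if y + t < r then y + t else y + t - (r::nat))"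
  by (auto simp: mod_if le_mod_geq)

lemma bad_count:
  assumes "d \<ge> 1" "r \<ge> 3" "n = d*r" "g \<le> r"
  shows "card {a \<in> Pow {..<n}. \<not> good r g (blk d r ` a)} \<le> r * 2^(n - g)"
proof -
  define rep where "rep y = (1 + d*y) mod n" for y
  have r1: "r \<ge> 1" using assms by simp
  have brep: "blk d r (rep y) = y" if "y < r" for y
    unfolding rep_def using blk_B[OF assms(1) r1, of 1 y] that assms by simp
  have repn: "rep y < n" for y unfolding rep_def using assms by simp
  define E where "E y = (\<lambda>t. rep ((y + t) mod r)) ` {..<g}" for y
  have Esub: "E y \<subseteq> {..<n}" for y unfolding E_def using repn by auto
  have Ecard: "card (E y) = g" if "y < r" for y
  proof -
    have "inj_on (\<lambda>t. rep ((y + t) mod r)) {..<g}"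
    proof (rule inj_onI)
      fix t t' assume tt: "t \<in> {..<g}" "t' \<in> {..<g}" "rep ((y + t) mod r) = rep ((y + t') mod r)"
      then have "blk d r (rep ((y + t) mod r)) = blk d r (rep ((y + t') mod r))" by simp
      then have "(y + t) mod r = (y + t') mod r" using brep assms by simp
      then show "t = t'" using mod_add_lt[of y r t] mod_add_lt[of y r t'] tt that assms
        by (auto split: if_splits)
    qed
    then show ?thesis unfolding E_def by (simp add: card_image)
  qed
  have sub: "{a \<in> Pow {..<n}. \<not> good r g (blk d r ` a)} \<subseteq> (\<Union>y\<in>{..<r}. {a \<in> Pow {..<n}. a \<inter> E y = {}})"
  proof
    fix a assume a: "a \<in> {a \<in> Pow {..<n}. \<not> good r g (blk d r ` a)}"
    then obtain y where y: "y < r" "\<forall>t<g. (y + t) mod r \<notin> blk d r ` a" unfolding good_def by auto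
    have "a \<inter> E y = {}"
    proof (rule ccontr)
      assume "a \<inter> E y \<noteq> {}"
      then obtain t where t: "t < g" "rep ((y + t) mod r) \<in> a" unfolding E_def by auto
      then have "blk d r (rep ((y + t) mod r)) \<in> blk d r ` a" by simp
      then have "(y + t) mod r \<in> blk d r ` a" using brep r1 by simp
      then show False using y t by blast
    qed
    then show "a \<in> (\<Union>y\<in>{..<r}. {a \<in> Pow {..<n}. a \<inter> E y = {}})" using a y by auto
  qed
  have "card {a \<in> Pow {..<n}. \<not> good r g (blk d r ` a)} \<le> card (\<Union>y\<in>{..<r}. {a \<in> Pow {..<n}. a \<inter> E y = {}})"
    by (rule card_mono[OF _ sub]) auto
  also have "\<dots> \<le> (\<Sum>y<r. card {a \<in> Pow {..<n}. a \<inter> E y = {}})" by (rule card_UN_le) simp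
  also have "\<dots> = (\<Sum>y<r. 2 ^ (n - g))"
  proof (rule sum.cong)
    fix y assume "y \<in> {..<r}"
    then show "card {a \<in> Pow {..<n}. a \<inter> E y = {}} = 2 ^ (n - g)"
      using card_Pow_avoid[OF _ Esub[of y]] Ecard[of y] by simp
  qed simp
  finally show ?thesis by simp
qed

lemma td_split: "rcr_td n d r = (\<Sum>a\<in>Pow {..<n}. \<Sum>x<r. rcr_dist n d r ({}, 0) (a, x))"
  unfolding rcr_td_def rcr_vertices_def by (simp add: sum.cartesian_product)

lemma td_upper_nat:
  assumes "d \<ge> 1" "r \<ge> 3" "n = d*r"
  shows "4 * rcr_td n d r + 8 * r * 2^n \<le> 2^n * (5 * r^2 + 8 + 2 * r * n)"
proof -
  define SW where "SW = (\<Sum>x<r. W r x)"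
  define SC where "SC = (\<Sum>a\<in>Pow {..<n}. card a)"
  have "rcr_td n d r \<le> (\<Sum>a\<in>Pow {..<n}. \<Sum>x<r. W r x + card a)"
    unfolding td_split using dist_upper[OF assms] by (intro sum_mono) auto
  also have "\<dots> = (\<Sum>a\<in>Pow {..<n}. SW + r * card a)" unfolding SW_def by (simp add: sum.distrib)
  also have "\<dots> = 2^n * SW + r * SC" unfolding SC_def by (simp add: sum.distrib sum_distrib_left card_Pow)
  finally have A: "rcr_td n d r \<le> 2^n * SW + r * SC" .
  have B: "2 * SC = n * 2^n" unfolding SC_def using sum_card_Pow[of "{..<n}"] by simp
  have C: "4 * SW + 8 * r \<le> 5 * r^2 + 8"
  proof -
    have "3 * r \<le> r * r" using mult_le_mono1[of 3 r r] assms by simp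
    then have "8 * r \<le> 5 * r^2 + 8" unfolding power2_eq_square by linarith
    then show ?thesis using sum_W[OF assms(2)] unfolding SW_def by linarith
  qed
  have E1: "(2::nat)^n * (4 * SW + 8 * r) = 4 * (2^n * SW) + 8 * r * 2^n" by (simp add: algebra_simps)
  have E2: "2 * r * (2 * SC) = 4 * (r * SC)" by simp
  have "4 * rcr_td n d r + 8 * r * 2^n \<le> 2^n * (4 * SW + 8 * r) + 2 * r * (2 * SC)"
    unfolding E1 E2 using A by linarith
  also have "\<dots> \<le> 2^n * (5 * r^2 + 8) + 2 * r * (n * 2^n)" using B C by simp
  finally show ?thesis by (simp add: algebra_simps)
qed

lemma TT_sum_small:
  assumes "d \<ge> 1" "r \<ge> 3" "n = d*r" "a \<subseteq> {..<n}"
  shows "(\<Sum>x<r. min x (r - x)) + (if (1 + d) mod n \<in> a then 2 else 0) \<le> (\<Sum>x<r. TT r (blk d r ` a) x)"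
proof -
  have r1: "r \<ge> 1" using assms by simp
  have S: "blk d r ` a \<subseteq> {..<r}" using blkS[OF assms(1) r1] assms by simp
  have "(\<Sum>x<r. min x (r - x)) + (if (1 + d) mod n \<in> a then 2 else 0)
       = (\<Sum>x<r. min x (r - x) + (if x = 0 \<and> (1 + d) mod n \<in> a then 2 else 0))"
    using assms by (simp add: sum.distrib sum.delta)
  also have "\<dots> \<le> (\<Sum>x<r. TT r (blk d r ` a) x)"
  proof (rule sum_mono)
    fix x assume x: "x \<in> {..<r}"
    have m: "min x (r - x) \<le> TT r (blk d r ` a) x" using TT_lb_dist[OF S, of x] x by simp
    show "min x (r - x) + (if x = 0 \<and> (1 + d) mod n \<in> a then 2 else 0) \<le> TT r (blk d r ` a) x"
    proof (cases "x = 0 \<and> (1 + d) mod n \<in> a")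
      case True
      have "blk d r ((1 + d * 1) mod (d * r)) = 1" using blk_B[OF assms(1) r1, of 1 1] assms by simp
      then have "1 \<in> blk d r ` a" using True assms by (metis image_eqI mult.right_neutral)
      then show ?thesis using TT_lb_one[OF S _ assms(2)] True by simp
    next
      case False then show ?thesis using m by (simp only: if_not_P[OF False]) simp
    qed
  qed
  finally show ?thesis .
qed

lemma td_lower_small_nat:
  assumes "d \<ge> 1" "r \<ge> 3" "n = d*r"
  shows "2^n * (r^2 + 2 * r * n) \<le> 4 * rcr_td n d r"
proof -
  define h where "h = (\<Sum>x<r. min x (r - x))"
  define SC where "SC = (\<Sum>a\<in>Pow {..<n}. card a)"
  define j where "j = (1 + d) mod n"
  have jn: "j \<in> {..<n}" unfolding j_def using assms by simp
  have "(\<Sum>a\<in>Pow {..<n}. r * card a + (h + (if j \<in> a then 2 else 0))) \<le> rcr_td n d r"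
    unfolding td_split
  proof (rule sum_mono)
    fix a assume a: "a \<in> Pow {..<n}"
    have "r * card a + (h + (if j \<in> a then 2 else 0)) \<le> (\<Sum>x<r. card a + TT r (blk d r ` a) x)"
      using TT_sum_small[OF assms, of a] a unfolding h_def j_def by (simp add: sum.distrib)
    also have "\<dots> \<le> (\<Sum>x<r. rcr_dist n d r ({}, 0) (a, x))"
      using dist_lower[OF assms] a by (intro sum_mono) auto
    finally show "r * card a + (h + (if j \<in> a then 2 else 0)) \<le> (\<Sum>x<r. rcr_dist n d r ({}, 0) (a, x))" .
  qed
  moreover have "(\<Sum>a\<in>Pow {..<n}. r * card a + (h + (if j \<in> a then 2 else 0)))
      = r * SC + 2^n * h + 2 * card {a \<in> Pow {..<n}. j \<in> a}"
  proof -
    have "(\<Sum>a\<in>Pow {..<n}. (if j \<in> a then 2 else 0)) = 2 * card {a \<in> Pow {..<n}. j \<in> a}"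
      using sum.inter_filter[of "Pow {..<n}" "\<lambda>_. (2::nat)" "\<lambda>a. j \<in> a"] by simp
    then show ?thesis unfolding SC_def by (simp add: sum.distrib sum_distrib_left card_Pow)
  qed
  moreover have "card {a \<in> Pow {..<n}. j \<in> a} = 2^(n-1)" using card_Pow_contains[of "{..<n}" j] jn by simp
  moreover have "2 * SC = n * 2^n" unfolding SC_def using sum_card_Pow[of "{..<n}"] by simp
  moreover have "r^2 \<le> 4 * h + 4" using h_formula[of r] unfolding h_def by presburger
  moreover have "2 * 2^(n-1) = (2::nat)^n"
  proof -
    have "n \<ge> 1" using assms by (simp add: Suc_le_eq)
    then show ?thesis by (cases n) simp_all
  qed
  ultimately have T: "r * SC + 2^n * h + 2^n \<le> rcr_td n d r" and S2: "2 * SC = n * 2^n"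
    and H: "r^2 \<le> 4 * h + 4" by auto
  have "2^n * r^2 \<le> 2^n * (4 * h + 4)" using H by (rule mult_le_mono2)
  then have "2^n * (r^2 + 2 * r * n) \<le> 2^n * (4 * h + 4) + 2 * r * (n * 2^n)"
    by (simp add: algebra_simps)
  also have "\<dots> = 4 * (r * SC + 2^n * h + 2^n)" using S2 by (simp add: algebra_simps)
  also have "\<dots> \<le> 4 * rcr_td n d r" using T by simp
  finally show ?thesis .
qed

lemma TT_sum_good:
  assumes "d \<ge> 1" "r \<ge> 3" "n = d*r" "a \<subseteq> {..<n}" "good r g (blk d r ` a)" "2 * g \<le> r"
  shows "int r * int r + int (\<Sum>x<r. min x (r - x)) - 2 * int g * int r \<le> int (\<Sum>x<r. TT r (blk d r ` a) x)"
proof -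
  have r1: "r \<ge> 1" using assms by simp
  have S: "blk d r ` a \<subseteq> {..<r}" using blkS[OF assms(1) r1] assms by simp
  have "int r * int r + int (\<Sum>x<r. min x (r - x)) - 2 * int g * int r
      = (\<Sum>x<r. int r + min (int x) (int r - int x) - 2 * int g)"
  proof -
    have "(\<Sum>x<r. min (int x) (int r - int x)) = (\<Sum>x<r. int (min x (r - x)))"
      by (rule sum.cong) (auto simp: min_def of_nat_diff)
    then show ?thesis by (simp add: sum.distrib sum_subtractf of_nat_sum)
  qed
  also have "\<dots> \<le> (\<Sum>x<r. int (TT r (blk d r ` a) x))"
    using TT_lb_good[OF S _ assms(5)] assms r1 by (intro sum_mono) auto
  finally show ?thesis by (simp add: of_nat_sum)
qed

lemma td_lower_large_int:
  assumes "d \<ge> 1" "r \<ge> 3" "n = d*r" "2 * g \<le> r"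
  shows "int r * int (\<Sum>a\<in>Pow {..<n}. card a)
          + int (card {a \<in> Pow {..<n}. good r g (blk d r ` a)}) *
            (int r * int r + int (\<Sum>x<r. min x (r - x)) - 2 * int g * int r) \<le> int (rcr_td n d r)"
proof -
  define Q where "Q = int r * int r + int (\<Sum>x<r. min x (r - x)) - 2 * int g * int r"
  have Q0: "Q \<ge> 0"
  proof -
    have "2 * int g * int r \<le> int r * int r" using assms by (intro mult_right_mono) auto
    moreover have "0 \<le> int (\<Sum>x<r. min x (r - x))" by (rule of_nat_0_le_iff)
    ultimately show ?thesis unfolding Q_def by linarith
  qed
  have "(\<Sum>a\<in>Pow {..<n}. int r * int (card a) + (if good r g (blk d r ` a) then Q else 0)) \<le> int (rcr_td n d r)"
    unfolding td_split of_nat_sum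
  proof (rule sum_mono)
    fix a assume a: "a \<in> Pow {..<n}"
    have "(if good r g (blk d r ` a) then Q else 0) \<le> int (\<Sum>x<r. TT r (blk d r ` a) x)"
      using TT_sum_good[OF assms(1-3) _ _ assms(4), of a] a unfolding Q_def by (auto simp: sum_nonneg)
    then have "int r * int (card a) + (if good r g (blk d r ` a) then Q else 0) \<le> int (\<Sum>x<r. card a + TT r (blk d r ` a) x)"
      by (simp add: sum.distrib)
    also have "\<dots> \<le> int (\<Sum>x<r. rcr_dist n d r ({}, 0) (a, x))"
      using dist_lower[OF assms(1-3)] a by (intro of_nat_mono sum_mono) auto
    finally show "int r * int (card a) + (if good r g (blk d r ` a) then Q else 0) \<le> (\<Sum>x<r. int (rcr_dist n d r ({}, 0) (a, x)))"
      by (simp add: of_nat_sum)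
  qed
  moreover have "(\<Sum>a\<in>Pow {..<n}. int r * int (card a) + (if good r g (blk d r ` a) then Q else 0))
     = int r * int (\<Sum>a\<in>Pow {..<n}. card a) + int (card {a \<in> Pow {..<n}. good r g (blk d r ` a)}) * Q"
  proof -
    have "(\<Sum>a\<in>Pow {..<n}. (if good r g (blk d r ` a) then Q else 0)) = int (card {a \<in> Pow {..<n}. good r g (blk d r ` a)}) * Q"
      using sum.inter_filter[of "Pow {..<n}" "\<lambda>_. Q" "\<lambda>a. good r g (blk d r ` a)"] by simp
    then show ?thesis by (simp add: sum.distrib sum_distrib_left of_nat_sum)
  qed
  ultimately show ?thesis unfolding Q_def by simp
qed

lemma pow_ge_lin: "k \<ge> 5 \<Longrightarrow> 4 * k + 4 \<le> (2::nat)^k"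
proof (induction k rule: dec_induct)
  case base then show ?case by simp
next
  case (step m) then show ?case by simp
qed

lemma large_lower:
  assumes "d \<ge> 1" "r \<ge> 3" "n = d*r" "r \<ge> 2^9"
  shows "2 ^ (n - 2) * (2 * real n * real r + 5 * real r ^ 2 - 20 * real r * (log 2 (real r))\<^sup>2) \<le> real (rcr_td n d r)"
proof -
  obtain k where k: "2^k \<le> r" "r < 2^(k+1)" using ex_power_ivl1[of 2 r] assms by auto
  have k9: "k \<ge> 9"
  proof (rule ccontr)
    assume "\<not> k \<ge> 9"
    then have "k + 1 \<le> 9" by simp
    then have "(2::nat)^(k+1) \<le> 2^9" by (rule power_increasing) simp
    then show False using k assms by linarith
  qed
  define g where "g = 2 * k + 2"
  have g2: "2 * g \<le> r" using pow_ge_lin[of k] k9 k unfolding g_def by simp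
  have n2: "n \<ge> 2" using assms by (simp add: le_trans[OF _ mult_le_mono1[of 1 d r]])
  have gn: "g \<le> n" using g2 assms by (metis le_trans mult_le_mono1 mult_1 le_add2 mult_2 le_add1)
  have rr: "r * r \<le> 2^g"
  proof -
    have "r * r \<le> 2^(k+1) * 2^(k+1)" using k by (intro mult_le_mono) auto
    also have "\<dots> = 2^g" unfolding g_def by (simp add: power_add[symmetric])
    finally show ?thesis .
  qed
  define Good where "Good = {a \<in> Pow {..<n}. good r g (blk d r ` a)}"
  define Bad where "Bad = {a \<in> Pow {..<n}. \<not> good r g (blk d r ` a)}"
  have cB: "card Bad \<le> r * 2^(n - g)" unfolding Bad_def using bad_count[OF assms(1-3)] g2 by simp
  have cGB: "card Good + card Bad = 2^n"
  proof -
    have "Good \<union> Bad = Pow {..<n}" "Good \<inter> Bad = {}" unfolding Good_def Bad_def by auto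
    then show ?thesis by (metis card_Pow card_Un_disjoint card_lessThan finite_Pow_iff finite_lessThan finite_Un)
  qed
  define h where "h = (\<Sum>x<r. min x (r - x))"
  define SC where "SC = (\<Sum>a\<in>Pow {..<n}. card a)"
  have S2: "2 * SC = n * 2^n" unfolding SC_def using sum_card_Pow[of "{..<n}"] by simp
  have hf: "4 * h + r mod 2 = r^2" using h_formula[of r] unfolding h_def .
  have main: "int r * int SC + int (card Good) * (int r * int r + int h - 2 * int g * int r) \<le> int (rcr_td n d r)"
    using td_lower_large_int[OF assms(1-3) g2] unfolding Good_def h_def SC_def .
  define N where "N = (2::real)^n"
  define P where "P = (2::real)^(n-2)"
  have NP: "N = 4 * P"
  proof -
    have "n = (n-2) + 2" using n2 by simp
    then have "(2::real)^n = 2^(n-2) * 2^2" by (metis power_add)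
    then show ?thesis unfolding N_def P_def by simp
  qed
  define R where "R = real r"
  define Q where "Q = R * R + real h - 2 * real g * R"
  define X where "X = real (rcr_td n d r)"
  define cG where "cG = real (card Good)"
  define cb where "cb = real (card Bad)"
  have R3: "R \<ge> 3" unfolding R_def using assms by simp
  have F1: "R * real SC + cG * Q \<le> X"
  proof -
    have "real_of_int (int r * int SC + int (card Good) * (int r * int r + int h - 2 * int g * int r)) \<le> real_of_int (int (rcr_td n d r))"
      using main by (rule of_int_le_iff[THEN iffD2])
    then show ?thesis unfolding R_def Q_def X_def cG_def by simp
  qed
  have SCr: "2 * real SC = real n * N" unfolding N_def using S2 by (metis of_nat_mult of_nat_numeral of_nat_power)
  have F2: "cG = N - cb" unfolding cG_def cb_def N_def using cGB by (metis add_diff_cancel_right' of_nat_add of_nat_numeral of_nat_power)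
  have Q0: "Q \<ge> 0"
  proof -
    have "2 * real g * R \<le> R * R" using g2 R3 unfolding R_def by (intro mult_right_mono) auto
    then show ?thesis unfolding Q_def by simp
  qed
  have hle: "4 * real h \<le> R^2" "4 * real h \<ge> R^2 - 1"
  proof -
    have "real (4 * h + r mod 2) = R^2" using hf unfolding R_def by (metis of_nat_power)
    moreover have "real (r mod 2) \<le> 1" by simp
    ultimately show "4 * real h \<le> R^2" "4 * real h \<ge> R^2 - 1" by simp_all
  qed
  have Q4: "4 * Q \<le> 5 * R^2" "4 * Q \<ge> 5 * R^2 - 1 - 8 * real g * R"
  proof -
    have gR: "0 \<le> real g * R" using R3 by simp
    show "4 * Q \<le> 5 * R^2" using hle gR unfolding Q_def power2_eq_square by (simp add: algebra_simps)
    show "4 * Q \<ge> 5 * R^2 - 1 - 8 * real g * R" using hle gR unfolding Q_def power2_eq_square by (simp add: algebra_simps)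
  qed
  have rcb: "R * cb \<le> N"
  proof -
    have "real (card Bad) \<le> real (r * 2^(n-g))" using of_nat_mono[OF cB] by blast
    then have "R * cb \<le> R * (R * 2^(n-g))" unfolding cb_def R_def using R3 by (intro mult_left_mono) auto
    also have "\<dots> = (R * R) * 2^(n-g)" by simp
    also have "\<dots> \<le> 2^g * 2^(n-g)"
    proof (rule mult_right_mono)
      show "R * R \<le> 2^g" using rr unfolding R_def by (metis of_nat_le_iff of_nat_mult of_nat_numeral of_nat_power)
    qed simp
    also have "\<dots> = N" unfolding N_def using gn by (simp add: power_add[symmetric])
    finally show ?thesis .
  qed
  have F3: "cb * (4 * Q) \<le> 5 * N * R"
  proof -
    have "R * (cb * (4 * Q)) = (R * cb) * (4 * Q)" by simp
    also have "\<dots> \<le> N * (4 * Q)" using rcb Q0 by (intro mult_right_mono) auto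
    also have "\<dots> \<le> N * (5 * R^2)" using Q4 unfolding N_def by (intro mult_left_mono) auto
    also have "\<dots> = R * (5 * N * R)" by (simp add: power2_eq_square)
    finally show ?thesis using R3 by simp
  qed
  define L where "L = log 2 (real r)"
  have Lk: "real k \<le> L" unfolding L_def using k by (intro le_log_of_power) (auto simp: of_nat_le_iff[symmetric])
  have L9: "9 \<le> L" using Lk k9 by simp
  have F5: "20 * R * L^2 \<ge> 1 + 8 * real g * R + 5 * R"
  proof -
    have "9 * L \<le> L * L" using L9 by (intro mult_right_mono) auto
    moreover have "real g = 2 * real k + 2" unfolding g_def by simp
    ultimately have "8 * real g + 6 \<le> 20 * L^2" using Lk L9 unfolding power2_eq_square by linarith
    then have "R * (8 * real g + 6) \<le> R * (20 * L^2)" using R3 by (intro mult_left_mono) auto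
    then show ?thesis using R3 by (simp add: algebra_simps)
  qed
  have "N * (2 * real n * R + 5 * R^2 - 20 * R * L^2) \<le> N * (2 * real n * R + 5 * R^2 - 1 - 8 * real g * R - 5 * R)"
    using F5 unfolding N_def by (intro mult_left_mono) auto
  also have "\<dots> = 2 * R * (real n * N) + N * (5 * R^2 - 1 - 8 * real g * R) - 5 * N * R" by (simp add: algebra_simps)
  also have "\<dots> \<le> 2 * R * (real n * N) + N * (4 * Q) - cb * (4 * Q)"
  proof -
    have "N * (5 * R^2 - 1 - 8 * real g * R) \<le> N * (4 * Q)" using Q4 unfolding N_def by (intro mult_left_mono) auto
    then show ?thesis using F3 by linarith
  qed
  also have "\<dots> = 4 * (R * real SC + cG * Q)"
  proof -
    have A: "2 * R * (real n * N) = 4 * R * real SC" using SCr by (metis mult.assoc mult.left_commute numeral_Bit0 mult_2 add_mult_distrib2 ring_distribs(1))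
    show ?thesis unfolding F2 A by (simp add: algebra_simps)
  qed
  also have "\<dots> \<le> 4 * X" using F1 by simp
  finally have "N * (2 * real n * R + 5 * R^2 - 20 * R * L^2) \<le> 4 * X" .
  then show ?thesis unfolding NP P_def X_def R_def L_def by simp
qed

theorem mainTheorem12:
  fixes d r n :: nat
  assumes "d \<ge> 1" and "r \<ge> 3" and "n = d * r" and "n \<ge> 2"
  shows "(r \<ge> 2^9 \<longrightarrow>
            2 ^ (n - 2) * real r ^ 2 * (2 * real d + 5) *
              (1 - 20 * (log 2 (real r))\<^sup>2 / (2 * real n + 5 * real r))
              \<le> real (rcr_td n d r)
          \<and> real (rcr_td n d r)
              \<le> 2 ^ (n - 2) * real r ^ 2 * (2 * real d + 5) *
                 (1 - 8 * (real r - 1) / (2 * real n * real r + 5 * (real r)\<^sup>2)))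
       \<and> (r < 2^9 \<longrightarrow>
            2 ^ (n - 2) * (2 * real n * real r + (real r)\<^sup>2) \<le> real (rcr_td n d r)
          \<and> real (rcr_td n d r)
              \<le> 2 ^ (n - 2) * (2 * real n * real r + 5 * (real r)\<^sup>2 - 8 * real r + 8))"
proof -
  define P where "P = (2::real)^(n-2)"
  define N where "N = (2::real)^n"
  have NP: "N = 4 * P"
  proof -
    have "n = (n-2) + 2" using assms by simp
    then have "(2::real)^n = 2^(n-2) * 2^2" by (metis power_add)
    then show ?thesis unfolding N_def P_def by simp
  qed
  have P0: "P > 0" unfolding P_def by simp
  have rn: "real n = real d * real r" using assms by simp
  have r0: "real r > 0" using assms by simp
  have upper: "real (rcr_td n d r) \<le> P * (2 * real n * real r + 5 * (real r)\<^sup>2 - 8 * real r + 8)"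
  proof -
    have "real (4 * rcr_td n d r + 8 * r * 2^n) \<le> real (2^n * (5 * r^2 + 8 + 2 * r * n))"
      using td_upper_nat[OF assms(1-3)] by (rule of_nat_mono)
    then have "4 * real (rcr_td n d r) + 8 * real r * N \<le> N * (5 * (real r)^2 + 8 + 2 * real r * real n)"
      unfolding N_def by simp
    then have "4 * real (rcr_td n d r) \<le> N * (2 * real n * real r + 5 * (real r)\<^sup>2 - 8 * real r + 8)"
      by (simp add: algebra_simps)
    then show ?thesis unfolding NP by simp
  qed
  have small: "P * (2 * real n * real r + (real r)\<^sup>2) \<le> real (rcr_td n d r)"
  proof -
    have "real (2^n * (r^2 + 2 * r * n)) \<le> real (4 * rcr_td n d r)"
      using td_lower_small_nat[OF assms(1-3)] by (rule of_nat_mono)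
    then have "N * ((real r)^2 + 2 * real r * real n) \<le> 4 * real (rcr_td n d r)"
      unfolding N_def by simp
    then show ?thesis unfolding NP by (simp add: algebra_simps)
  qed
  have eq1: "2 ^ (n - 2) * real r ^ 2 * (2 * real d + 5) * (1 - 20 * (log 2 (real r))\<^sup>2 / (2 * real n + 5 * real r))
      = P * (2 * real n * real r + 5 * real r ^ 2 - 20 * real r * (log 2 (real r))\<^sup>2)"
  proof -
    have "0 \<le> 2 * (real d * real r)" by simp
    then have den: "2 * (real d * real r) + 5 * real r \<noteq> 0" using r0 by linarith
    show ?thesis unfolding P_def rn using r0 den by (simp add: field_simps power2_eq_square)
  qed
  have eq2: "2 ^ (n - 2) * real r ^ 2 * (2 * real d + 5) * (1 - 8 * (real r - 1) / (2 * real n * real r + 5 * (real r)\<^sup>2))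
      = P * (2 * real n * real r + 5 * (real r)\<^sup>2 - 8 * real r + 8)"
  proof -
    have "0 \<le> 2 * (real d * real r) * real r" by simp
    moreover have "0 < real r * real r" using r0 by simp
    ultimately have den: "2 * (real d * real r) * real r + 5 * (real r * real r) \<noteq> 0" by linarith
    show ?thesis unfolding P_def rn using r0 den by (simp add: field_simps power2_eq_square)
  qed
  show ?thesis
  proof (intro conjI impI)
    assume "r \<ge> 2^9"
    then show "2 ^ (n - 2) * real r ^ 2 * (2 * real d + 5) * (1 - 20 * (log 2 (real r))\<^sup>2 / (2 * real n + 5 * real r))
        \<le> real (rcr_td n d r)"
      unfolding eq1 P_def using large_lower[OF assms(1-3)] by simp
  next
    show "real (rcr_td n d r) \<le> 2 ^ (n - 2) * real r ^ 2 * (2 * real d + 5) *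
                 (1 - 8 * (real r - 1) / (2 * real n * real r + 5 * (real r)\<^sup>2))"
      unfolding eq2 by (rule upper)
  next
    show "2 ^ (n - 2) * (2 * real n * real r + (real r)\<^sup>2) \<le> real (rcr_td n d r)"
      using small unfolding P_def .
  next
    show "real (rcr_td n d r) \<le> 2 ^ (n - 2) * (2 * real n * real r + 5 * (real r)\<^sup>2 - 8 * real r + 8)"
      using upper unfolding P_def .
  qed
qed

end
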